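(* The map $F:K\times\mathbf S^k_{++}\to\mathbb{R}\cup\{\infty\}$ is continuous (with $\mathbb{R}\cup\{\infty\}$ carrying its order topology).
   Context: $\mathbf S^k_{++}$ is the set of $k\times k$ symmetric positive-definite matrices. $\mathcal I$ is a collection of nonempty subsets of $\{1,\dots,k\}$, $a\in\mathbb{R}^k\setminus\{0\}$. $P_I:\mathbb{R}^k\to\mathbb{R}^{|I|}$ is the coordinate projection onto $I$, and for $A\in\mathbf S^k_{++}$, $A_I^\dagger:=P_I^\top(P_IAP_I^\top)^{-1}P_I$. Costs $c_I\in\mathbb{R}^m_{\ge0}$ and $B_0\in\mathbb{R}^m_{>0}$; vector inequalities componentwise. $K=\{\underline\nu\in\mathbb{R}^{\mathcal I}:\underline\nu\ge0,\ \sum_I\nu_Ic_I\le B_0\}$. $F(\underline\nu,A)=a^\top(\sum_I\nu_IA_I^\dagger)^\dagger a$ if $a\in\operatorname{range}(\sum_I\nu_IA_I^\dagger)$ and $F(\underline\nu,A)=\infty$ otherwise; $\dagger$ denotes the Moore–Penrose pseudo-inverse. *)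

theory Defs
  imports "HOL-Analysis.Analysis"
begin

text \<open>Symmetric positive-definite k x k matrices; the index set {1..k} is the finite type 'k.\<close>
definition spd :: "(real^'k^'k) set" where
  "spd = {A. transpose A = A \<and> (\<forall>x. x \<noteq> 0 \<longrightarrow> x \<bullet> (A *v x) > 0)}"

definition mp_pinv :: "real^'n^'n \<Rightarrow> real^'n^'n" where
  "mp_pinv M = (THE X. M ** X ** M = M \<and> X ** M ** X = X \<and>
       transpose (M ** X) = M ** X \<and> transpose (X ** M) = X ** M)"

text \<open>Coordinate projection P_I : R^k \<rightarrow> R^|I| is represented by restriction to I, and
  P_I^T by extension by zero.  Then A_I^dagger = P_I^T (P_I A P_I^T)^{-1} P_I maps v to the
  unique x supported on I whose image A x agrees with v on I.\<close>
definition restr_inv :: "real^'k^'k \<Rightarrow> 'k set \<Rightarrow> real^'k^'k" where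
  "restr_inv A I = matrix (\<lambda>v. THE x. (\<forall>i. i \<notin> I \<longrightarrow> x $ i = 0) \<and>
                                       (\<forall>i\<in>I. (A *v x) $ i = v $ i))"

definition feasK :: "('k::finite) set set \<Rightarrow> ('k set \<Rightarrow> real^'m) \<Rightarrow> real^'m \<Rightarrow> (real^('k set)) set" where
  "feasK \<I> c B0 = {\<nu>. (\<forall>I. I \<notin> \<I> \<longrightarrow> \<nu> $ I = 0) \<and> (\<forall>I\<in>\<I>. \<nu> $ I \<ge> 0) \<and>
                      (\<forall>j. (\<Sum>I\<in>\<I>. \<nu> $ I * c I $ j) \<le> B0 $ j)}"

definition Fobj :: "('k::finite) set set \<Rightarrow> real^'k \<Rightarrow> real^('k set) \<Rightarrow> real^'k^'k \<Rightarrow> ereal" where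
  "Fobj \<I> a \<nu> A = (let M = (\<Sum>I\<in>\<I>. \<nu> $ I *\<^sub>R restr_inv A I) in
      if a \<in> range (\<lambda>x. M *v x) then ereal (a \<bullet> (mp_pinv M *v a)) else \<infinity>)"

end

theory Submission
  imports Defs
begin


definition symf :: "real^'n^'n \<Rightarrow> bool" where
  "symf M \<longleftrightarrow> (\<forall>x y. x \<bullet> (M *v y) = (M *v x) \<bullet> y)"

lemma inner_transpose: "x \<bullet> (M *v y) = (transpose M *v x) \<bullet> (y::real^'n)"
  for M :: "real^'n^'m"
  by (simp add: dot_lmul_matrix[symmetric])

lemma symf_transpose: "symf M \<longleftrightarrow> transpose M = M"
proof
  assume s: "symf M"
  have "transpose M *v x = M *v x" for x
  proof -
    have "\<forall>y. (transpose M *v x - M *v x) \<bullet> y = 0"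
      using s by (simp add: symf_def inner_transpose inner_diff_left)
    then show ?thesis by (metis eq_iff_diff_eq_0 inner_eq_zero_iff)
  qed
  then show "transpose M = M" by (simp add: matrix_eq)
next
  assume "transpose M = M" then show "symf M"
    by (metis inner_transpose symf_def)
qed

lemma mp_unique:
  fixes M X Y :: "real^'n^'n"
  assumes x1: "M ** X ** M = M" and x2: "X ** M ** X = X" and x3: "transpose (M ** X) = M ** X"
    and x4: "transpose (X ** M) = X ** M"
  assumes y1: "M ** Y ** M = M" and y2: "Y ** M ** Y = Y" and y3: "transpose (M ** Y) = M ** Y"
    and y4: "transpose (Y ** M) = Y ** M"
  shows "X = Y"
proof -
  have "X = X ** (M ** X)" using x2 by (simp add: matrix_mul_assoc)
  also have "\<dots> = X ** transpose X ** transpose M"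
  proof -
    have "M ** X = transpose X ** transpose M" by (subst x3[symmetric]) (rule matrix_transpose_mul)
    then show ?thesis by (simp add: matrix_mul_assoc)
  qed
  also have "\<dots> = X ** transpose X ** transpose (M ** Y ** M)" using y1 by simp
  also have "\<dots> = X ** (transpose (M ** X) ** transpose (M ** Y))"
    by (simp add: matrix_transpose_mul matrix_mul_assoc)
  also have "\<dots> = X ** M ** X ** M ** Y" using x3 y3 by (simp add: matrix_mul_assoc)
  also have "\<dots> = X ** M ** Y" using x2 by simp
  finally have X: "X = X ** M ** Y" .
  have "Y = (Y ** M) ** Y" using y2 by simp
  also have "\<dots> = transpose M ** transpose Y ** Y"
  proof -
    have "Y ** M = transpose M ** transpose Y" by (subst y4[symmetric]) (rule matrix_transpose_mul)
    then show ?thesis by simp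
  qed
  also have "\<dots> = transpose (M ** X ** M) ** transpose Y ** Y" using x1 by simp
  also have "\<dots> = transpose (X ** M) ** transpose (Y ** M) ** Y"
    by (simp add: matrix_transpose_mul matrix_mul_assoc)
  also have "\<dots> = X ** M ** Y ** M ** Y" using x4 y4 by (simp add: matrix_mul_assoc)
  also have "\<dots> = X ** M ** (Y ** M ** Y)" by (simp add: matrix_mul_assoc)
  also have "\<dots> = X ** M ** Y" using y2 by simp
  finally show ?thesis using X by simp
qed

lemma mp_exists:
  fixes M :: "real^'n^'n"
  assumes s: "symf M"
  shows "\<exists>X. M ** X ** M = M \<and> X ** M ** X = X \<and>
       transpose (M ** X) = M ** X \<and> transpose (X ** M) = X ** M"
proof -
  let ?V = "range (\<lambda>x. M *v x)"
  have sub: "subspace ?V" by (simp add: linear_subspace_image)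
  have spanV: "span ?V = ?V" using sub by (simp add: span_eq_iff)
  have kr: "z = 0" if zV: "z \<in> ?V" and zk: "M *v z = 0" for z
  proof -
    obtain u where u: "z = M *v u" using zV by auto
    have "z \<bullet> z = u \<bullet> (M *v z)" using s u by (simp add: symf_def inner_commute)
    then show ?thesis using zk by simp
  qed
  have inj: "inj_on (\<lambda>x. M *v x) (span ?V)"
    unfolding spanV
    by (rule inj_onI) (metis kr eq_iff_diff_eq_0 matrix_vector_mult_diff_distrib sub subspace_diff)
  obtain g where g: "range g \<subseteq> span ?V" "linear g" "\<forall>x\<in>span ?V. g (M *v x) = x"
    using linear_inj_on_left_inverse[OF matrix_vector_mul_linear inj] by blast
  have gV: "g x \<in> ?V" for x using g(1) spanV by auto
  have gM: "g (M *v x) = x" if "x \<in> ?V" for x using g(3) spanV that by auto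
  define G where "G = matrix g"
  have Gv: "G *v x = g x" for x using g(2) by (simp add: G_def matrix_works)
  define P where "P = G ** M"
  have Pv: "P *v x = g (M *v x)" for x by (simp add: P_def Gv matrix_vector_mul_assoc[symmetric])
  have MP: "M *v (P *v x) = M *v x" for x
  proof -
    obtain w z where wz: "w \<in> span ?V" "\<And>v. v \<in> span ?V \<Longrightarrow> orthogonal z v" "x = w + z"
      using orthogonal_subspace_decomp_exists by blast
    have "(M *v z) \<bullet> (M *v z) = z \<bullet> (M *v (M *v z))" using s unfolding symf_def by metis
    also have "\<dots> = 0" using wz(2)[of "M *v (M *v z)"] spanV by (auto simp: orthogonal_def)
    finally have Mz: "M *v z = 0" by simp
    have w: "w \<in> ?V" "M *v w = M *v x"
      using wz(1) spanV by (auto simp: wz(3) matrix_vector_right_distrib Mz)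
    have "P *v x = g (M *v w)" using Pv w(2) by simp
    also have "\<dots> = w" using gM w(1) by simp
    finally show ?thesis using w(2) by simp
  qed
  have PV: "P *v x = x" if "x \<in> ?V" for x
  proof -
    have d: "P *v x - x \<in> ?V" using gV Pv that sub by (simp add: subspace_diff)
    have e: "M *v (P *v x - x) = 0" using MP by (simp add: matrix_vector_mult_diff_distrib)
    from kr[OF d e] show ?thesis by simp
  qed
  have PG: "P *v (G *v x) = G *v x" for x using PV gV Gv by auto
  have Psym: "symf P"
  proof -
    have k: "M *v (x - P *v x) = 0" for x using MP by (simp add: matrix_vector_mult_diff_distrib)
    have o: "(x - P *v x) \<bullet> (P *v y) = 0" for x y
    proof -
      have "P *v y \<in> ?V" using Pv gV by simp
      then obtain u where "P *v y = M *v u" by auto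
      then show ?thesis using s k by (simp add: symf_def)
    qed
    have "x \<bullet> (P *v y) = (P *v x) \<bullet> y" for x y
    proof -
      have "x \<bullet> (P *v y) = (P *v x) \<bullet> (P *v y)" using o[of x y] by (simp add: inner_diff_left)
      also have "\<dots> = (P *v x) \<bullet> y"
      proof -
        have "(P *v x) \<bullet> (y - P *v y) = 0" using o[of y x] by (simp add: inner_commute)
        then show ?thesis by (simp add: inner_diff_right)
      qed
      finally show ?thesis .
    qed
    then show ?thesis by (simp add: symf_def)
  qed
  define X where "X = G ** P"
  have MX: "M ** X = P"
  proof -
    have "M *v (G *v (P *v x)) = P *v x" for x
    proof -
      have "P *v x \<in> ?V" using Pv gV by simp
      then obtain u where u: "P *v x = M *v u" by auto
      have "M *v (G *v (P *v x)) = M *v (P *v u)" using u Gv Pv by simp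
      also have "\<dots> = P *v x" using MP u by simp
      finally show ?thesis .
    qed
    then show ?thesis unfolding matrix_eq X_def by (simp add: matrix_vector_mul_assoc[symmetric])
  qed
  have XM: "X ** M = P"
  proof -
    have "G *v (P *v (M *v x)) = P *v x" for x
      using PV[of "M *v x"] by (simp add: Gv Pv)
    then show ?thesis unfolding matrix_eq X_def by (simp add: matrix_vector_mul_assoc[symmetric])
  qed
  have "M ** X ** M = M"
  proof -
    have "P ** M = M" unfolding matrix_eq matrix_vector_mul_assoc[symmetric]
      using PV by simp
    then show ?thesis using MX by simp
  qed
  moreover have "X ** M ** X = X"
  proof -
    have PGm: "P ** G = G" unfolding matrix_eq matrix_vector_mul_assoc[symmetric] using PG by simp
    have "X ** M ** X = P ** X" using XM by simp
    also have "\<dots> = (P ** G) ** P" by (simp add: X_def matrix_mul_assoc)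
    also have "\<dots> = X" using PGm by (simp add: X_def)
    finally show ?thesis .
  qed
  ultimately show ?thesis using MX XM Psym symf_transpose by metis
qed

lemma mp_pinv_prop:
  fixes M :: "real^'n^'n"
  assumes "symf M"
  shows "M ** mp_pinv M ** M = M"
proof -
  have "\<exists>!X. M ** X ** M = M \<and> X ** M ** X = X \<and>
       transpose (M ** X) = M ** X \<and> transpose (X ** M) = X ** M"
    using mp_exists[OF assms] mp_unique by blast
  from theI'[OF this] show ?thesis unfolding mp_pinv_def by blast
qed



definition psd :: "real^'n^'n \<Rightarrow> bool" where
  "psd M \<longleftrightarrow> symf M \<and> (\<forall>x. 0 \<le> x \<bullet> (M *v x))"

definition Fv :: "real^'n^'n \<Rightarrow> real^'n \<Rightarrow> ereal" where
  "Fv M a = (if a \<in> range (\<lambda>x. M *v x) then ereal (a \<bullet> (mp_pinv M *v a)) else \<infinity>)"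

lemma Fv_range:
  assumes p: "psd M" and y: "M *v y = a"
  shows "Fv M a = ereal (y \<bullet> (M *v y))"
proof -
  have s: "symf M" using p psd_def by blast
  have "a \<bullet> (mp_pinv M *v a) = y \<bullet> (M *v (mp_pinv M *v (M *v y)))"
    using s y unfolding symf_def by metis
  also have "\<dots> = y \<bullet> ((M ** mp_pinv M ** M) *v y)" by (simp add: matrix_vector_mul_assoc matrix_mul_assoc)
  also have "\<dots> = y \<bullet> (M *v y)" using mp_pinv_prop[OF s] by simp
  finally show ?thesis using y by (auto simp: Fv_def)
qed

lemma quad_expand:
  assumes s: "symf N"
  shows "(z - y) \<bullet> (N *v (z - y)) = z \<bullet> (N *v z) - 2 * (z \<bullet> (N *v y)) + y \<bullet> (N *v y)"
proof -
  have "y \<bullet> (N *v z) = z \<bullet> (N *v y)" using s unfolding symf_def by (metis inner_commute)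
  then show ?thesis
    by (simp add: matrix_vector_mult_diff_distrib inner_diff_left inner_diff_right)
qed

lemma quad_ineq:
  assumes p: "psd N"
  shows "2 * (z \<bullet> (N *v y)) - y \<bullet> (N *v y) \<le> z \<bullet> (N *v z)"
proof -
  have "0 \<le> (z - y) \<bullet> (N *v (z - y))" using p psd_def by blast
  moreover have "symf N" using p psd_def by blast
  ultimately show ?thesis using quad_expand[of N z y] by linarith
qed

lemma psd_zero:
  assumes p: "psd N" and x: "x \<bullet> (N *v x) = 0"
  shows "N *v x = 0"
proof (rule ccontr)
  assume ne: "N *v x \<noteq> 0"
  define w where "w = N *v x"
  define b where "b = w \<bullet> w"
  define c where "c = w \<bullet> (N *v w)"
  have b0: "b > 0" using ne by (simp add: b_def w_def)
  have c0: "c \<ge> 0" using p psd_def c_def by blast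
  define t where "t = b / (c + 1)"
  have t0: "t > 0" using b0 c0 by (simp add: t_def)
  have "0 \<le> (x - t *\<^sub>R w) \<bullet> (N *v (x - t *\<^sub>R w))" using p psd_def by blast
  moreover have "x \<bullet> (N *v w) = b"
    using p unfolding psd_def symf_def b_def w_def by metis
  ultimately have "0 \<le> - 2 * (t * b) + t * t * c"
    using x quad_expand[of N x "t *\<^sub>R w"] p unfolding psd_def
    by (simp add: c_def matrix_vector_mult_scaleR)
  then have "0 \<le> t * (t * c - 2 * b)" by (simp add: algebra_simps)
  then have "2 * b \<le> t * c" using t0 by (simp add: zero_le_mult_iff)
  moreover have "t * c < 2 * b"
  proof -
    have "c / (c + 1) < 1" using c0 by simp
    then have "b * (c / (c + 1)) < b * 1" using b0 by (intro mult_strict_left_mono)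
    moreover have "t * c = b * (c / (c + 1))" by (simp add: t_def)
    ultimately show ?thesis using b0 by simp
  qed
  ultimately show False by simp
qed



lemma not_range_ker:
  fixes M :: "real^'n^'n"
  assumes s: "symf M" and a: "a \<notin> range (\<lambda>x. M *v x)"
  shows "\<exists>z. M *v z = 0 \<and> a \<bullet> z \<noteq> 0"
proof -
  let ?V = "range (\<lambda>x. M *v x)"
  have sub: "subspace ?V" by (simp add: linear_subspace_image)
  have spanV: "span ?V = ?V" using sub by (simp add: span_eq_iff)
  obtain y z where y: "y \<in> span ?V" and z: "\<And>w. w \<in> span ?V \<Longrightarrow> orthogonal z w" and e: "a = y + z"
    using orthogonal_subspace_decomp_exists by blast
  have z0: "z \<noteq> 0" using a e y spanV by auto
  have "(M *v z) \<bullet> (M *v z) = z \<bullet> (M *v (M *v z))" using s unfolding symf_def by metis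
  also have "\<dots> = 0" using z[of "M *v (M *v z)"] spanV by (auto simp: orthogonal_def)
  finally have Mz: "M *v z = 0" by simp
  have "a \<bullet> z = z \<bullet> z" using z[of y] y by (simp add: e inner_add_left inner_add_right orthogonal_def inner_commute)
  then show ?thesis using Mz z0 by auto
qed

lemma Fv_lower:
  assumes p: "psd M"
  shows "ereal (2 * (a \<bullet> x) - x \<bullet> (M *v x)) \<le> Fv M a"
proof (cases "a \<in> range (\<lambda>x. M *v x)")
  case True
  then obtain y where y: "M *v y = a" by auto
  have s: "symf M" using p psd_def by blast
  have "a \<bullet> x = y \<bullet> (M *v x)" using s y unfolding symf_def by (metis inner_commute)
  then show ?thesis using Fv_range[OF p y] quad_ineq[OF p, of y x] by simp
next
  case False
  then show ?thesis by (simp add: Fv_def)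
qed

lemma Fv_approx:
  assumes p: "psd M" and l: "l < Fv M a"
  shows "\<exists>x. l < ereal (2 * (a \<bullet> x) - x \<bullet> (M *v x))"
proof (cases "a \<in> range (\<lambda>x. M *v x)")
  case True
  then obtain y where y: "M *v y = a" by auto
  have "2 * (a \<bullet> y) - y \<bullet> (M *v y) = y \<bullet> (M *v y)" using y by (simp add: inner_commute)
  then show ?thesis using Fv_range[OF p y] l by metis
next
  case False
  have s: "symf M" using p psd_def by blast
  obtain z where z: "M *v z = 0" "a \<bullet> z \<noteq> 0" using not_range_ker[OF s False] by blast
  obtain r where r: "l \<le> ereal r"
  proof (cases l)
    case (real r0) then show ?thesis using that[of r0] by simp
  next
    case PInf then show ?thesis using l False by (simp add: Fv_def)
  next
    case MInf then show ?thesis using that[of 0] by simp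
  qed
  define t where "t = (r + 1) / (2 * (a \<bullet> z))"
  have e: "2 * (a \<bullet> (t *\<^sub>R z)) - (t *\<^sub>R z) \<bullet> (M *v (t *\<^sub>R z)) = r + 1"
    using z by (simp add: t_def matrix_vector_mult_scaleR)
  have "ereal r < ereal (r + 1)" by simp
  from le_less_trans[OF r this]
  have "l < ereal (2 * (a \<bullet> (t *\<^sub>R z)) - (t *\<^sub>R z) \<bullet> (M *v (t *\<^sub>R z)))"
    unfolding e .
  then show ?thesis by blast
qed

lemma Fv_upper:
  fixes M :: "real^'n^'n" and N :: "'i \<Rightarrow> real^'n^'n"
  assumes fin: "finite S" and p: "psd M" and pN: "\<forall>I\<in>S. psd (N I)"
    and dom: "\<forall>x. (\<Sum>I\<in>S. x \<bullet> (N I *v x)) \<le> x \<bullet> (M *v x)"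
    and a: "a = (\<Sum>I\<in>S. N I *v z I)"
  shows "Fv M a \<le> ereal (\<Sum>I\<in>S. z I \<bullet> (N I *v z I))"
proof (cases "a \<in> range (\<lambda>x. M *v x)")
  case True
  then obtain y where y: "M *v y = a" by auto
  have ay: "a \<bullet> y = (\<Sum>I\<in>S. z I \<bullet> (N I *v y))"
    unfolding a inner_sum_left
    using pN by (intro sum.cong) (auto simp: psd_def symf_def inner_commute)
  have "y \<bullet> (M *v y) = 2 * (a \<bullet> y) - y \<bullet> (M *v y)" using y by (simp add: inner_commute)
  also have "\<dots> \<le> (\<Sum>I\<in>S. 2 * (z I \<bullet> (N I *v y)) - y \<bullet> (N I *v y))"
    using dom[rule_format, of y] by (simp add: ay sum_subtractf sum_distrib_left)
  also have "\<dots> \<le> (\<Sum>I\<in>S. z I \<bullet> (N I *v z I))"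
    using pN by (intro sum_mono quad_ineq) auto
  finally show ?thesis using Fv_range[OF p y] by simp
next
  case False
  have s: "symf M" using p psd_def by blast
  obtain w where w: "M *v w = 0" "a \<bullet> w \<noteq> 0" using not_range_ker[OF s False] by blast
  have "(\<Sum>I\<in>S. w \<bullet> (N I *v w)) \<le> 0" using dom[rule_format, of w] w by simp
  moreover have nn: "\<forall>I\<in>S. 0 \<le> w \<bullet> (N I *v w)" using pN psd_def by blast
  ultimately have "\<forall>I\<in>S. w \<bullet> (N I *v w) = 0"
    using sum_nonneg_eq_0_iff[OF fin] by (metis (no_types, lifting) antisym sum_nonneg)
  then have "\<forall>I\<in>S. N I *v w = 0" using pN psd_zero by blast
  then have "a \<bullet> w = 0" unfolding a inner_sum_left
  proof (intro sum.neutral ballI)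
    fix I assume I: "I \<in> S" and N0: "\<forall>I\<in>S. N I *v w = 0"
    have "symf (N I)" using pN I psd_def by blast
    then have "z I \<bullet> (N I *v w) = (N I *v z I) \<bullet> w" unfolding symf_def by blast
    then show "(N I *v z I) \<bullet> w = 0" using N0 I by simp
  qed
  then show ?thesis using w by simp
qed



definition supp :: "'k set \<Rightarrow> real^'k \<Rightarrow> bool" where
  "supp I x \<longleftrightarrow> (\<forall>i. i \<notin> I \<longrightarrow> x $ i = 0)"

definition riP :: "real^'k^'k \<Rightarrow> 'k set \<Rightarrow> real^'k \<Rightarrow> real^'k \<Rightarrow> bool" where
  "riP A I v x \<longleftrightarrow> (\<forall>i. i \<notin> I \<longrightarrow> x $ i = 0) \<and> (\<forall>i\<in>I. (A *v x) $ i = v $ i)"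

lemma supp_inner:
  assumes "supp I d" "\<forall>i\<in>I. u $ i = v $ i"
  shows "d \<bullet> u = d \<bullet> v"
  unfolding inner_vec_def using assms by (intro sum.cong) (auto simp: supp_def)

lemma spd_symf: "A \<in> spd \<Longrightarrow> symf A"
  by (simp add: spd_def symf_transpose)

lemma spd_pos: "A \<in> spd \<Longrightarrow> x \<noteq> 0 \<Longrightarrow> x \<bullet> (A *v x) > 0"
  by (simp add: spd_def)

lemma spd_nonneg: "A \<in> spd \<Longrightarrow> x \<bullet> (A *v x) \<ge> 0"
  by (cases "x = 0") (auto dest: spd_pos[of A x])

lemma spd_zero:
  assumes "A \<in> spd" "supp I d" "\<forall>i\<in>I. (A *v d) $ i = 0"
  shows "d = 0"
proof -
  have "d \<bullet> (A *v d) = d \<bullet> 0" using assms by (intro supp_inner) auto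
  then show ?thesis using spd_pos[OF assms(1), of d] by auto
qed

lemma riP_unique:
  assumes A: "A \<in> spd" and x: "riP A I v x" and x': "riP A I v x'"
  shows "x = x'"
proof -
  have "x - x' = 0"
    using x x' by (intro spd_zero[OF A, of I]) (auto simp: supp_def riP_def matrix_vector_mult_diff_distrib)
  then show ?thesis by simp
qed

definition Pz :: "'k set \<Rightarrow> real^'k \<Rightarrow> real^'k" where
  "Pz I v = (\<chi> i. if i \<in> I then v $ i else 0)"

lemma Pz_add: "Pz I (x + y) = Pz I x + Pz I y"
  by (simp add: Pz_def vec_eq_iff)

lemma Pz_scale: "Pz I (c *\<^sub>R x) = c *\<^sub>R Pz I x"
  by (simp add: Pz_def vec_eq_iff)

lemma Pz_comp: "Pz I x $ i = (if i \<in> I then x $ i else 0)"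
  by (simp add: Pz_def)

lemma riP_exists:
  assumes A: "A \<in> spd"
  shows "\<exists>x. riP A I v x"
proof -
  define f where "f x = Pz I (A *v (Pz I x)) + (x - Pz I x)" for x
  have fc: "f x $ i = (if i \<in> I then (A *v Pz I x) $ i else x $ i)" for x i
    by (simp add: f_def Pz_comp)
  have lin: "linear f"
  proof (rule linearI)
    fix x y show "f (x + y) = f x + f y"
      unfolding f_def Pz_add matrix_vector_right_distrib by (simp add: algebra_simps)
  next
    fix c :: real and x show "f (c *\<^sub>R x) = c *\<^sub>R f x"
      unfolding f_def Pz_scale matrix_vector_mult_scaleR by (simp add: algebra_simps)
  qed
  have "inj f"
    unfolding linear_injective_0[OF lin]
  proof (intro allI impI)
    fix x assume fx: "f x = 0"
    have c: "f x $ i = 0" for i using fx by simp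
    have s: "supp I x"
      unfolding supp_def using c fc by metis
    have px: "Pz I x = x" using s by (auto simp: Pz_def supp_def vec_eq_iff)
    have "\<forall>i\<in>I. (A *v x) $ i = 0" using c fc px by metis
    then show "x = 0" using spd_zero[OF A s] by blast
  qed
  then have "surj f" using lin linear_injective_imp_surjective by blast
  then obtain x where fx: "f x = Pz I v" by (metis surjD)
  have c: "f x $ i = Pz I v $ i" for i using fx by simp
  have xo: "x $ i = 0" if "i \<notin> I" for i
    using c[of i] fc[of x i] that by (simp add: Pz_comp)
  have px: "Pz I x = x" using xo by (auto simp: Pz_def vec_eq_iff)
  have "(A *v x) $ i = v $ i" if "i \<in> I" for i
    using c[of i] fc[of x i] that px by (simp add: Pz_comp)
  then show ?thesis using xo unfolding riP_def by blast
qed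

lemma restr_inv_apply:
  assumes A: "A \<in> spd"
  shows "riP A I v (restr_inv A I *v v)"
proof -
  define g where "g v = (THE x. riP A I v x)" for v
  have g: "riP A I v (g v)" for v
    unfolding g_def using riP_exists[OF A] riP_unique[OF A] by (metis theI)
  have gu: "g v = x" if "riP A I v x" for v x using g riP_unique[OF A] that by blast
  have lin: "linear g"
  proof (rule linearI)
    fix u w
    show "g (u + w) = g u + g w"
      using g[of u] g[of w] by (intro gu) (auto simp: riP_def matrix_vector_right_distrib)
  next
    fix c :: real and u
    show "g (c *\<^sub>R u) = c *\<^sub>R g u"
      using g[of u] by (intro gu) (auto simp: riP_def matrix_vector_mult_scaleR)
  qed
  have "restr_inv A I = matrix g" unfolding restr_inv_def g_def riP_def by simp
  then show ?thesis using g lin by (simp add: matrix_works)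
qed

lemma restr_inv_supp: "A \<in> spd \<Longrightarrow> supp I (restr_inv A I *v v)"
  using restr_inv_apply by (auto simp: riP_def supp_def)

lemma restr_inv_eq: "A \<in> spd \<Longrightarrow> i \<in> I \<Longrightarrow> (A *v (restr_inv A I *v v)) $ i = v $ i"
  using restr_inv_apply[of A I v] unfolding riP_def by blast

lemma restr_inv_inv:
  assumes A: "A \<in> spd" and w: "supp I w"
  shows "restr_inv A I *v (A *v w) = w"
  using riP_unique[OF A restr_inv_apply[OF A]] w by (auto simp: riP_def supp_def)

lemma restr_inv_quad:
  assumes A: "A \<in> spd"
  shows "v \<bullet> (restr_inv A I *v v) = (restr_inv A I *v v) \<bullet> (A *v (restr_inv A I *v v))"
proof -
  let ?x = "restr_inv A I *v v"
  have "?x \<bullet> v = ?x \<bullet> (A *v ?x)"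
    using restr_inv_supp[OF A] restr_inv_eq[OF A] by (intro supp_inner) auto
  then show ?thesis by (simp add: inner_commute)
qed

lemma restr_inv_psd:
  assumes A: "A \<in> spd"
  shows "psd (restr_inv A I)"
proof -
  let ?R = "restr_inv A I"
  have "u \<bullet> (?R *v v) = (?R *v u) \<bullet> v" for u v
  proof -
    have "u \<bullet> (?R *v v) = (?R *v v) \<bullet> (A *v (?R *v u))"
      using restr_inv_supp[OF A] restr_inv_eq[OF A] by (subst inner_commute, intro supp_inner) auto
    also have "\<dots> = (?R *v u) \<bullet> (A *v (?R *v v))"
      using spd_symf[OF A] unfolding symf_def by (metis inner_commute)
    also have "\<dots> = (?R *v u) \<bullet> v"
      using restr_inv_supp[OF A] restr_inv_eq[OF A] by (intro supp_inner) auto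
    finally show ?thesis .
  qed
  moreover have "0 \<le> v \<bullet> (?R *v v)" for v
    using restr_inv_quad[OF A] spd_nonneg[OF A] by simp
  ultimately show ?thesis by (simp add: psd_def symf_def)
qed



lemma norm_mv:
  fixes B :: "real^'n^'m"
  shows "norm (B *v x) \<le> real CARD('m) * real CARD('n) * norm B * norm x"
proof -
  have "onorm ((*v) B) \<le> real CARD('m) * real CARD('n) * norm B"
  proof (rule onorm_le_matrix_component)
    fix i j
    have "\<bar>B $ i $ j\<bar> \<le> norm (B $ i)" by (rule component_le_norm_cart)
    also have "\<dots> \<le> norm B" by (rule Finite_Cartesian_Product.norm_nth_le)
    finally show "\<bar>B $ i $ j\<bar> \<le> norm B" .
  qed
  moreover have "norm (B *v x) \<le> onorm ((*v) B) * norm x"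
    by (rule onorm[OF matrix_vector_mul_bounded_linear])
  ultimately show ?thesis by (meson mult_right_mono norm_ge_zero order_trans)
qed

lemma spd_coercive:
  assumes A: "A \<in> spd"
  shows "\<exists>l>0. \<forall>x. l * (x \<bullet> x) \<le> x \<bullet> (A *v x)"
proof -
  have "continuous_on (sphere 0 1) (\<lambda>x::real^'a. x \<bullet> (A *v x))"
    by (intro continuous_intros)
  moreover have ne: "sphere (0::real^'a) 1 \<noteq> {}" by simp
  ultimately obtain x1 where x1: "x1 \<in> sphere 0 1" and m: "\<forall>y\<in>sphere 0 1. x1 \<bullet> (A *v x1) \<le> y \<bullet> (A *v y)"
    using continuous_attains_inf[OF compact_sphere] by blast
  have "x1 \<noteq> 0" using x1 by auto
  then have l0: "x1 \<bullet> (A *v x1) > 0" using spd_pos[OF A, of x1] by auto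
  have "x1 \<bullet> (A *v x1) * (x \<bullet> x) \<le> x \<bullet> (A *v x)" for x
  proof (cases "x = 0")
    case True then show ?thesis by simp
  next
    case False
    define u where "u = (1 / norm x) *\<^sub>R x"
    have "u \<in> sphere 0 1" using False by (simp add: u_def)
    then have "x1 \<bullet> (A *v x1) \<le> u \<bullet> (A *v u)" using m by blast
    also have "\<dots> = (x \<bullet> (A *v x)) / (norm x * norm x)"
      by (simp add: u_def matrix_vector_mult_scaleR)
    finally have "x1 \<bullet> (A *v x1) * (norm x * norm x) \<le> x \<bullet> (A *v x)"
      using False by (simp add: field_simps)
    then show ?thesis by (simp add: power2_norm_eq_inner[symmetric] power2_eq_square)
  qed
  then show ?thesis using l0 by blast
qed

lemma restr_inv_cont:
  "continuous_on spd (\<lambda>A::real^'k^'k. restr_inv A I *v y)"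
  unfolding continuous_on_iff
proof (intro ballI allI impI)
  fix A0 :: "real^'k^'k" and e :: real
  assume A0: "A0 \<in> spd" and e: "0 < e"
  obtain l where l: "l > 0" "\<forall>x. l * (x \<bullet> x) \<le> x \<bullet> (A0 *v x)" using spd_coercive[OF A0] by blast
  define C where "C = real CARD('k) * real CARD('k)"
  have C: "C > 0" by (simp add: C_def)
  define x0 where "x0 = restr_inv A0 I *v y"
  define \<delta> where "\<delta> = min (l / (2 * C)) (e * l / (2 * C * (norm x0 + 1)))"
  have "norm x0 + 1 > 0" using norm_ge_zero[of x0] by linarith
  then have "0 < e * l / (2 * C * (norm x0 + 1))"
    using l C e by (intro divide_pos_pos mult_pos_pos) (auto simp: add_pos_nonneg)
  moreover have "0 < l / (2 * C)" using l C by simp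
  ultimately have d0: "\<delta> > 0" by (simp add: \<delta>_def)
  show "\<exists>d>0. \<forall>A\<in>spd. dist A A0 < d \<longrightarrow> dist (restr_inv A I *v y) (restr_inv A0 I *v y) < e"
  proof (intro exI[of _ \<delta>] conjI ballI impI d0)
    fix A assume A: "A \<in> spd" and dA: "dist A A0 < \<delta>"
    define \<eta> where "\<eta> = norm (A - A0)"
    have \<eta>: "\<eta> < \<delta>" "\<eta> \<ge> 0" using dA by (simp_all add: \<eta>_def dist_norm)
    define x where "x = restr_inv A I *v y"
    define d where "d = x - x0"
    have sd: "supp I d" using restr_inv_supp[OF A] restr_inv_supp[OF A0]
      by (auto simp: supp_def d_def x_def x0_def)
    have h1: "d \<bullet> (A *v d) = d \<bullet> ((A0 - A) *v x0)"
    proof (rule supp_inner[OF sd], intro ballI)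
      fix i assume i: "i \<in> I"
      have "(A *v x) $ i = y $ i" "(A0 *v x0) $ i = y $ i"
        using restr_inv_eq[OF A i] restr_inv_eq[OF A0 i] by (simp_all add: x_def x0_def)
      then show "(A *v d) $ i = ((A0 - A) *v x0) $ i"
        by (simp add: d_def matrix_vector_mult_diff_distrib matrix_vector_mult_diff_rdistrib)
    qed
    have h2: "d \<bullet> ((A0 - A) *v x0) \<le> norm d * (C * \<eta> * norm x0)"
    proof -
      have "d \<bullet> ((A0 - A) *v x0) \<le> norm d * norm ((A0 - A) *v x0)"
        using Cauchy_Schwarz_ineq2[of d "(A0 - A) *v x0"] by linarith
      also have "\<dots> \<le> norm d * (C * \<eta> * norm x0)"
        using norm_mv[of "A0 - A" x0] by (intro mult_left_mono) (auto simp: C_def \<eta>_def norm_minus_commute)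
      finally show ?thesis .
    qed
    have h3: "- (d \<bullet> ((A - A0) *v d)) \<le> norm d * (C * \<eta> * norm d)"
    proof -
      have "- (d \<bullet> ((A - A0) *v d)) \<le> norm d * norm ((A - A0) *v d)"
        using Cauchy_Schwarz_ineq2[of d "(A - A0) *v d"] by linarith
      also have "\<dots> \<le> norm d * (C * \<eta> * norm d)"
        using norm_mv[of "A - A0" d] by (intro mult_left_mono) (auto simp: C_def \<eta>_def)
      finally show ?thesis .
    qed
    have h4: "d \<bullet> (A0 *v d) = d \<bullet> (A *v d) - d \<bullet> ((A - A0) *v d)"
      by (simp add: matrix_vector_mult_diff_rdistrib inner_diff_right)
    have "l * (norm d * norm d) \<le> d \<bullet> (A0 *v d)"
      using l(2) by (simp add: power2_norm_eq_inner[symmetric] power2_eq_square)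
    then have h5': "l * (norm d * norm d) \<le> norm d * (C * \<eta> * norm x0) + norm d * (C * \<eta> * norm d)"
      using h1 h2 h3 h4 by linarith
    have "norm d * (C * \<eta> * norm d) = C * \<eta> * (norm d * norm d)" by (simp add: mult_ac)
    with h5' have h5: "l * (norm d * norm d) \<le> norm d * (C * \<eta> * norm x0) + C * \<eta> * (norm d * norm d)"
      by simp
    have C\<eta>: "C * \<eta> \<le> l / 2"
    proof -
      have "\<eta> \<le> l / (2 * C)" using \<eta> by (simp add: \<delta>_def)
      then show ?thesis using C by (simp add: field_simps)
    qed
    have C\<eta>2: "C * \<eta> * norm x0 < e * l / 2"
    proof -
      have "\<eta> < e * l / (2 * C * (norm x0 + 1))" using \<eta> by (simp add: \<delta>_def)
      moreover have K: "2 * C * (norm x0 + 1) > 0" using C \<open>norm x0 + 1 > 0\<close>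
        by simp
      ultimately have "\<eta> * (2 * C * (norm x0 + 1)) < e * l" by (simp add: pos_less_divide_eq)
      then have "C * \<eta> * (norm x0 + 1) < e * l / 2" by (simp add: mult_ac)
      moreover have "C * \<eta> * norm x0 \<le> C * \<eta> * (norm x0 + 1)"
      proof -
        have "0 \<le> C * \<eta>" using C \<eta> by simp
        then show ?thesis by (simp add: distrib_left)
      qed
      ultimately show ?thesis by linarith
    qed
    have "norm d < e"
    proof (cases "norm d = 0")
      case True then show ?thesis using e by simp
    next
      case False
      then have nd: "norm d > 0" by simp
      have "l * (norm d * norm d) \<le> norm d * (C * \<eta> * norm x0) + (l / 2) * (norm d * norm d)"
      proof -
        have "C * \<eta> * (norm d * norm d) \<le> (l / 2) * (norm d * norm d)"
          using C\<eta> by (intro mult_right_mono) auto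
        then show ?thesis using h5 by linarith
      qed
      then have "(l / 2) * (norm d * norm d) \<le> norm d * (C * \<eta> * norm x0)" by simp
      then have "norm d * ((l / 2) * norm d) \<le> norm d * (C * \<eta> * norm x0)"
        by (simp add: mult_ac)
      then have "(l / 2) * norm d \<le> C * \<eta> * norm x0" using nd
        by (simp add: mult_le_cancel_left_pos)
      moreover have "e * l / 2 = (l / 2) * e" by simp
      ultimately have "(l / 2) * norm d < (l / 2) * e" using C\<eta>2 by linarith
      then show ?thesis using l by simp
    qed
    then show "dist (restr_inv A I *v y) (restr_inv A0 I *v y) < e"
      by (simp add: dist_norm d_def x_def x0_def)
  qed
qed



definition Msum :: "'k set set \<Rightarrow> real^('k set) \<Rightarrow> real^'k^'k \<Rightarrow> real^'k^'k" where
  "Msum \<I> \<nu> A = (\<Sum>I\<in>\<I>. \<nu> $ I *\<^sub>R restr_inv A I)"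

lemma Fobj_Fv: "Fobj \<I> a \<nu> A = Fv (Msum \<I> \<nu> A) a"
  by (simp add: Fobj_def Fv_def Msum_def Let_def)

lemma sum_mv:
  fixes N :: "'i \<Rightarrow> real^'n^'m"
  shows "(\<Sum>I\<in>S. c I *\<^sub>R N I) *v x = (\<Sum>I\<in>S. c I *\<^sub>R (N I *v x))"
proof (induction S rule: infinite_finite_induct)
  case (infinite A) then show ?case by (simp add: matrix_vector_mult_def vec_eq_iff)
next
  case empty then show ?case by (simp add: matrix_vector_mult_def vec_eq_iff)
next
  case (insert I F) then show ?case
    by (simp add: matrix_vector_mult_add_rdistrib scaleR_matrix_vector_assoc)
qed

lemma Msum_quad:
  "x \<bullet> (Msum \<I> \<nu> A *v x) = (\<Sum>I\<in>\<I>. \<nu> $ I * (x \<bullet> (restr_inv A I *v x)))"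
  by (simp add: Msum_def sum_mv inner_sum_right)

lemma psd_scale:
  assumes p: "psd N" and c: "c \<ge> 0"
  shows "psd (c *\<^sub>R N)"
proof -
  have s: "x \<bullet> (N *v y) = (N *v x) \<bullet> y" for x y using p by (simp add: psd_def symf_def)
  have n: "0 \<le> x \<bullet> (N *v x)" for x using p by (simp add: psd_def)
  have "x \<bullet> ((c *\<^sub>R N) *v y) = ((c *\<^sub>R N) *v x) \<bullet> y" for x y
    using s[of x y] by (simp add: scaleR_matrix_vector_assoc[symmetric])
  moreover have "0 \<le> x \<bullet> ((c *\<^sub>R N) *v x)" for x
    using n[of x] c by (simp add: scaleR_matrix_vector_assoc[symmetric])
  ultimately show ?thesis by (simp add: psd_def symf_def)
qed

lemma Msum_psd:
  assumes A: "A \<in> spd" and nn: "\<forall>I\<in>\<I>. \<nu> $ I \<ge> 0"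
  shows "psd (Msum \<I> \<nu> A)"
proof -
  have "x \<bullet> (Msum \<I> \<nu> A *v y) = (Msum \<I> \<nu> A *v x) \<bullet> y" for x y
    using restr_inv_psd[OF A]
    by (simp add: Msum_def sum_mv inner_sum_right inner_sum_left psd_def symf_def)
  moreover have "0 \<le> x \<bullet> (Msum \<I> \<nu> A *v x)" for x
    unfolding Msum_quad using restr_inv_psd[OF A] nn
    by (intro sum_nonneg) (simp add: psd_def)
  ultimately show ?thesis by (simp add: psd_def symf_def)
qed

lemma feasK_nn: "\<nu> \<in> feasK \<I> c B0 \<Longrightarrow> \<forall>I\<in>\<I>. \<nu> $ I \<ge> 0"
  by (simp add: feasK_def)

lemma bl_mv: "bounded_linear (\<lambda>A::real^'n^'m. A *v v)"
proof -
  have "linear (\<lambda>A::real^'n^'m. A *v v)"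
    by (rule linearI) (simp_all add: matrix_vector_mult_add_rdistrib scaleR_matrix_vector_assoc)
  then show ?thesis by (simp add: linear_conv_bounded_linear)
qed



theorem lemmaE6:
  fixes \<I> :: "'k::finite set set" and a :: "real^'k"
    and c :: "'k set \<Rightarrow> real^'m::finite" and B0 :: "real^'m"
  assumes "\<forall>I\<in>\<I>. I \<noteq> {}"
    and "a \<noteq> 0"
    and "\<forall>I\<in>\<I>. \<forall>j. c I $ j \<ge> 0"
    and "\<forall>j. B0 $ j > 0"
  shows "continuous_on (feasK \<I> c B0 \<times> spd) (\<lambda>(\<nu>, A). Fobj \<I> a \<nu> A)"
proof -
  define S where "S = feasK \<I> c B0 \<times> (spd :: (real^'k^'k) set)"
  define F where "F q = Fv (Msum \<I> (fst q) (snd q)) a" for q :: "(real^('k set)) \<times> (real^'k^'k)"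
  have feq: "(\<lambda>(\<nu>, A). Fobj \<I> a \<nu> A) = F" by (auto simp: F_def Fobj_Fv)
  have Spsd: "psd (Msum \<I> (fst q) (snd q))" if "q \<in> S" for q
    using that by (auto simp: S_def intro!: Msum_psd dest: feasK_nn)
  have inS: "eventually (\<lambda>q. q \<in> S) (at p within S)" for p
    by (simp add: eventually_at_filter)
  have rcont: "continuous_on S (\<lambda>q. x \<bullet> (restr_inv (snd q) I *v x))" for x I
  proof -
    have "continuous_on spd (\<lambda>A::real^'k^'k. x \<bullet> (restr_inv A I *v x))"
      by (intro continuous_intros restr_inv_cont)
    then show ?thesis
      by (rule continuous_on_compose2[where f = snd]) (auto simp: S_def intro: continuous_intros)
  qed
  have hcont: "continuous_on S (\<lambda>q. 2 * (a \<bullet> x) - x \<bullet> (Msum \<I> (fst q) (snd q) *v x))" for x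
    unfolding Msum_quad
    by (intro continuous_intros rcont)
  show ?thesis
    unfolding feq S_def[symmetric] continuous_on_def
  proof (intro ballI)
    fix p assume pS: "p \<in> S"
    obtain \<nu>0 A0 where p: "p = (\<nu>0, A0)" by (cases p)
    have A0: "A0 \<in> spd" and nu0: "\<forall>I\<in>\<I>. \<nu>0 $ I \<ge> 0"
      using pS by (auto simp: p S_def dest: feasK_nn)
    show "(F \<longlongrightarrow> F p) (at p within S)"
      unfolding order_tendsto_iff
    proof (intro conjI allI impI)
      fix l assume l: "l < F p"
      obtain x where x: "l < ereal (2 * (a \<bullet> x) - x \<bullet> (Msum \<I> (fst p) (snd p) *v x))"
        using Fv_approx[OF Spsd[OF pS]] l unfolding F_def by blast
      let ?h = "\<lambda>q. 2 * (a \<bullet> x) - x \<bullet> (Msum \<I> (fst q) (snd q) *v x)"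
      have "((\<lambda>q. ereal (?h q)) \<longlongrightarrow> ereal (?h p)) (at p within S)"
        using hcont[of x] pS unfolding continuous_on_def lim_ereal by blast
      then have "eventually (\<lambda>q. l < ereal (?h q)) (at p within S)"
        using x by (rule order_tendstoD)
      then show "eventually (\<lambda>q. l < F q) (at p within S)"
        using inS[of p]
      proof eventually_elim
        case (elim q)
        then show ?case using Fv_lower[OF Spsd[OF elim(2)], of a x] unfolding F_def
          by (meson less_le_trans)
      qed
    next
      fix u assume u: "F p < u"
      then have "a \<in> range (\<lambda>x. Msum \<I> \<nu>0 A0 *v x)"
        by (auto simp: F_def Fv_def p split: if_splits)
      then obtain y where y: "Msum \<I> \<nu>0 A0 *v y = a" by auto
      define S0 where "S0 = {I\<in>\<I>. \<nu>0 $ I \<noteq> 0}"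
      have S0pos: "\<forall>I\<in>S0. \<nu>0 $ I > 0" using nu0 by (auto simp: S0_def less_le)
      define aI where "aI I = \<nu>0 $ I *\<^sub>R (restr_inv A0 I *v y)" for I
      have suppa: "supp I (aI I)" for I
        using restr_inv_supp[OF A0, of I y] by (auto simp: supp_def aI_def)
      have asum: "a = (\<Sum>I\<in>S0. aI I)"
      proof -
        have "a = (\<Sum>I\<in>\<I>. aI I)" using y by (simp add: Msum_def sum_mv aI_def)
        also have "\<dots> = (\<Sum>I\<in>S0. aI I)"
          by (rule sum.mono_neutral_right) (auto simp: S0_def aI_def)
        finally show ?thesis .
      qed
      define G where "G q = (\<Sum>I\<in>S0. ((snd q *v aI I) \<bullet> aI I) / (fst q $ I))" for q :: "(real^('k set)) \<times> (real^'k^'k)"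
      have Gp: "ereal (G p) = F p"
      proof -
        have "G p = (\<Sum>I\<in>S0. \<nu>0 $ I * (y \<bullet> (restr_inv A0 I *v y)))"
          unfolding G_def p fst_conv snd_conv
        proof (intro sum.cong refl)
          fix I assume I: "I \<in> S0"
          have "(A0 *v aI I) \<bullet> aI I = \<nu>0 $ I * \<nu>0 $ I * (y \<bullet> (restr_inv A0 I *v y))"
            using restr_inv_quad[OF A0, of y I]
            by (simp add: aI_def matrix_vector_mult_scaleR inner_commute)
          then show "(A0 *v aI I) \<bullet> aI I / \<nu>0 $ I = \<nu>0 $ I * (y \<bullet> (restr_inv A0 I *v y))"
            using S0pos I by simp
        qed
        also have "\<dots> = (\<Sum>I\<in>\<I>. \<nu>0 $ I * (y \<bullet> (restr_inv A0 I *v y)))"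
          by (rule sum.mono_neutral_left) (auto simp: S0_def)
        also have "\<dots> = y \<bullet> (Msum \<I> \<nu>0 A0 *v y)" by (simp add: Msum_quad)
        finally have "G p = y \<bullet> (Msum \<I> \<nu>0 A0 *v y)" .
        moreover have ps0: "psd (Msum \<I> \<nu>0 A0)" using Spsd[OF pS] by (simp add: p)
        ultimately show ?thesis
          using Fv_range[OF ps0 y] by (simp add: F_def p)
      qed
      have Gc: "(G \<longlongrightarrow> G p) (at p within S)"
      proof -
        have "isCont G p"
          unfolding G_def
        proof (intro continuous_intros)
          fix I assume "I \<in> S0"
          then show "fst p $ I \<noteq> 0" using S0pos by (auto simp: p)
        next
          fix I
          show "isCont (\<lambda>q. snd q *v aI I) p"
            by (intro continuous_intros bounded_linear.isCont[OF bl_mv])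
        qed
        then show ?thesis by (simp add: isCont_def tendsto_within_subset[OF _ subset_UNIV])
      qed
      have "eventually (\<lambda>q. ereal (G q) < u) (at p within S)"
        using Gc Gp u unfolding lim_ereal[symmetric] by (metis order_tendstoD(2))
      moreover have "eventually (\<lambda>q. \<forall>I\<in>S0. fst q $ I > 0) (at p within S)"
      proof (rule eventually_ball_finite)
        show "finite S0" by simp
        show "\<forall>I\<in>S0. eventually (\<lambda>q. fst q $ I > 0) (at p within S)"
        proof
          fix I assume I: "I \<in> S0"
          have "((\<lambda>q. fst q $ I) \<longlongrightarrow> fst p $ I) (at p within S)"
            by (intro tendsto_intros)
          then show "eventually (\<lambda>q. fst q $ I > 0) (at p within S)"
            using S0pos I by (intro order_tendstoD(1)) (auto simp: p)
        qed
      qed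
      ultimately show "eventually (\<lambda>q. F q < u) (at p within S)"
        using inS[of p]
      proof eventually_elim
        case (elim q)
        obtain \<nu> A where q: "q = (\<nu>, A)" by (cases q)
        have A: "A \<in> spd" and nn: "\<forall>I\<in>\<I>. \<nu> $ I \<ge> 0"
          using elim(3) by (auto simp: q S_def dest: feasK_nn)
        have pos: "\<forall>I\<in>S0. \<nu> $ I > 0" using elim(2) by (simp add: q)
        define N where "N I = \<nu> $ I *\<^sub>R restr_inv A I" for I
        define z where "z I = (1 / \<nu> $ I) *\<^sub>R (A *v aI I)" for I
        have S0sub: "S0 \<subseteq> \<I>" by (auto simp: S0_def)
        have Nz: "N I *v z I = aI I" if "I \<in> S0" for I
        proof -
          have "N I *v z I = (\<nu> $ I * (1 / \<nu> $ I)) *\<^sub>R (restr_inv A I *v (A *v aI I))"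
            by (simp add: N_def z_def scaleR_matrix_vector_assoc[symmetric] matrix_vector_mult_scaleR)
          also have "\<dots> = aI I"
          proof -
            have "\<nu> $ I \<noteq> 0" using pos that by auto
            then show ?thesis using restr_inv_inv[OF A suppa] by simp
          qed
          finally show ?thesis .
        qed
        have "Fv (Msum \<I> \<nu> A) a \<le> ereal (\<Sum>I\<in>S0. z I \<bullet> (N I *v z I))"
        proof (rule Fv_upper)
          show "finite S0" by simp
          show "psd (Msum \<I> \<nu> A)" using Msum_psd[OF A nn] .
          show "\<forall>I\<in>S0. psd (N I)"
            using pos restr_inv_psd[OF A] by (auto simp: N_def intro!: psd_scale)
          show "\<forall>x. (\<Sum>I\<in>S0. x \<bullet> (N I *v x)) \<le> x \<bullet> (Msum \<I> \<nu> A *v x)"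
          proof
            fix x
            have "(\<Sum>I\<in>S0. x \<bullet> (N I *v x)) = (\<Sum>I\<in>S0. \<nu> $ I * (x \<bullet> (restr_inv A I *v x)))"
              by (simp add: N_def scaleR_matrix_vector_assoc[symmetric])
            also have "\<dots> \<le> (\<Sum>I\<in>\<I>. \<nu> $ I * (x \<bullet> (restr_inv A I *v x)))"
              using S0sub nn restr_inv_psd[OF A]
              by (intro sum_mono2) (auto simp: psd_def)
            finally show "(\<Sum>I\<in>S0. x \<bullet> (N I *v x)) \<le> x \<bullet> (Msum \<I> \<nu> A *v x)"
              by (simp add: Msum_quad)
          qed
          show "a = (\<Sum>I\<in>S0. N I *v z I)" using asum Nz by simp
        qed
        also have "(\<Sum>I\<in>S0. z I \<bullet> (N I *v z I)) = G q"
          unfolding G_def q fst_conv snd_conv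
        proof (intro sum.cong refl)
          fix I assume I: "I \<in> S0"
          have "z I \<bullet> (N I *v z I) = z I \<bullet> aI I" using Nz[OF I] by simp
          also have "\<dots> = (A *v aI I) \<bullet> aI I / \<nu> $ I" by (simp add: z_def)
          finally show "z I \<bullet> (N I *v z I) = (A *v aI I) \<bullet> aI I / \<nu> $ I" .
        qed
        finally show ?case using elim(1) by (simp add: F_def q)
      qed
    qed
  qed
qed

end
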